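(* Let $(Y,d)$ be a metric space and let $k:Y\times Y\to[0,+\infty)$ be a positive, symmetric, bounded kernel such that the family $\{k(\cdot,y): y\in Y\}$ is uniformly equicontinuous on $(Y,d)$. Then $A(Y)=R(Y)\neq\emptyset$.
   Context: For a regular Borel probability measure $\mu$ on $Y$ (metric topology) the potential is $U^\mu(x)=\int_Y k(x,y)\,d\mu(y)$, and $A(\mu,Y):=\overline{\mathrm{conv}}\{U^\mu(x):x\in Y\}=[\inf_Y U^\mu,\sup_Y U^\mu]$. Let $\mathfrak{M}_1(Y)$ be the set of regular Borel probability measures on $Y$ and $\mathfrak{M}_1^{\#}(Y)$ those with finite support. The average set is $A(Y):=\bigcap_{\mu\in\mathfrak{M}_1(Y)}A(\mu,Y)$ and the rendezvous set is $R(Y):=\bigcap_{n\in\mathbb{N}}\bigcap_{w_1,\dots,w_n\in Y}A(\frac1n\sum_{j=1}^n\delta_{w_j},Y)$, which equals $\bigcap_{\mu\in\mathfrak{M}_1^{\#}(Y)}A(\mu,Y)$. *)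

theory Defs
  imports "HOL-Probability.Probability"
begin

definition regular_borel_prob :: "'a::metric_space measure \<Rightarrow> bool" where
  "regular_borel_prob M \<longleftrightarrow>
     sets M = sets borel \<and> prob_space M \<and>
     (\<forall>B\<in>sets borel.
        emeasure M B = (SUP K\<in>{K. compact K \<and> K \<subseteq> B}. emeasure M K) \<and>
        emeasure M B = (INF U\<in>{U. open U \<and> B \<subseteq> U}. emeasure M U))"

definition potential :: "('a \<Rightarrow> 'a \<Rightarrow> real) \<Rightarrow> 'a measure \<Rightarrow> 'a \<Rightarrow> real" where
  "potential k M x = (\<integral>y. k x y \<partial>M)"

definition A_mu :: "('a \<Rightarrow> 'a \<Rightarrow> real) \<Rightarrow> 'a measure \<Rightarrow> real set" where
  "A_mu k M = closure (convex hull (range (potential k M)))"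

definition average_set :: "('a::metric_space \<Rightarrow> 'a \<Rightarrow> real) \<Rightarrow> real set" where
  "average_set k = \<Inter> {A_mu k M | M. regular_borel_prob M}"

text \<open>Rendezvous set R(Y): intersection over all n \<ge> 1 and w_1..w_n of
  A((1/n) sum delta_{w_j}, Y); the list ws = [w_1,...,w_n] gives the empirical measure.\<close>
definition rendezvous_set :: "('a \<Rightarrow> 'a \<Rightarrow> real) \<Rightarrow> real set" where
  "rendezvous_set k = \<Inter> {A_mu k (measure_pmf (pmf_of_multiset (mset ws))) | ws. ws \<noteq> []}"

end

theory Submission imports Defs begin
lemma cl_hull_interval:
  fixes f :: "'a \<Rightarrow> real"
  assumes b: "\<And>x. 0 \<le> f x \<and> f x \<le> C"
  shows "closure (convex hull (range f)) = {Inf (range f)..Sup (range f)}"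
proof
  have bb: "bdd_below (range f)" "bdd_above (range f)" using b by (auto intro!: bdd_belowI bdd_aboveI)
  show "closure (convex hull range f) \<subseteq> {Inf (range f)..Sup (range f)}"
  proof (rule closure_minimal)
    show "convex hull range f \<subseteq> {Inf (range f)..Sup (range f)}"
      by (rule hull_minimal) (auto intro!: cInf_lower cSup_upper bb)
  qed simp
  show "{Inf (range f)..Sup (range f)} \<subseteq> closure (convex hull range f)"
  proof
    fix t assume t: "t \<in> {Inf (range f)..Sup (range f)}"
    have sub: "closure (range f) \<subseteq> closure (convex hull range f)"
      by (intro closure_mono hull_subset)
    consider "t = Inf (range f)" | "t = Sup (range f)" | "Inf (range f) < t" "t < Sup (range f)"
      using t by fastforce
    then show "t \<in> closure (convex hull range f)"
    proof cases
      case 1 then show ?thesis using closure_contains_Inf[of "range f"] bb sub by auto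
    next
      case 2 then show ?thesis using closure_contains_Sup[of "range f"] bb sub by auto
    next
      case 3
      obtain a where a: "a \<in> range f" "a < t" using cInf_lessD[of "range f" t] 3 by auto
      obtain c where c: "c \<in> range f" "t < c" using less_cSupD[of "range f" t] 3 by auto
      have "t \<in> closed_segment a c" using a c by (auto simp: closed_segment_eq_real_ivl)
      moreover have "closed_segment a c \<subseteq> convex hull range f"
        using a c by (simp add: closed_segment_subset hull_inc)
      ultimately show ?thesis using closure_subset by blast
    qed
  qed
qed
lemma pot_pmf:
  assumes "finite (set_pmf p)"
  shows "potential k (measure_pmf p) x = (\<Sum>y\<in>set_pmf p. k x y * pmf p y)"
  unfolding potential_def by (rule integral_measure_pmf_real) (use assms in auto)

lemma cross:
  assumes "finite (set_pmf p)" "finite (set_pmf q)" and symm: "\<And>x y. k x y = k y x"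
  shows "(\<Sum>x\<in>set_pmf q. pmf q x * potential k (measure_pmf p) x)
       = (\<Sum>y\<in>set_pmf p. pmf p y * potential k (measure_pmf q) y)"
proof -
  have "(\<Sum>x\<in>set_pmf q. pmf q x * potential k (measure_pmf p) x)
     = (\<Sum>x\<in>set_pmf q. \<Sum>y\<in>set_pmf p. pmf q x * pmf p y * k x y)"
    by (simp add: pot_pmf assms sum_distrib_left mult_ac)
  also have "\<dots> = (\<Sum>y\<in>set_pmf p. \<Sum>x\<in>set_pmf q. pmf q x * pmf p y * k x y)"
    by (rule sum.swap)
  also have "\<dots> = (\<Sum>y\<in>set_pmf p. pmf p y * potential k (measure_pmf q) y)"
    by (simp add: pot_pmf assms sum_distrib_left mult_ac symm)
  finally show ?thesis .
qed

lemma wavg_bounds: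
  fixes f :: "'a \<Rightarrow> real"
  assumes "finite A" "\<And>x. x \<in> A \<Longrightarrow> 0 \<le> w x" "(\<Sum>x\<in>A. w x) = 1"
    and "bdd_below (range f)" "bdd_above (range f)"
  shows "Inf (range f) \<le> (\<Sum>x\<in>A. w x * f x)" "(\<Sum>x\<in>A. w x * f x) \<le> Sup (range f)"
proof -
  have "Inf (range f) = (\<Sum>x\<in>A. w x * Inf (range f))" using assms(3) by (simp add: sum_distrib_right[symmetric])
  also have "\<dots> \<le> (\<Sum>x\<in>A. w x * f x)"
    by (intro sum_mono mult_left_mono) (auto intro!: cInf_lower assms)
  finally show "Inf (range f) \<le> (\<Sum>x\<in>A. w x * f x)" .
  have "(\<Sum>x\<in>A. w x * f x) \<le> (\<Sum>x\<in>A. w x * Sup (range f))"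
    by (intro sum_mono mult_left_mono) (auto intro!: cSup_upper assms)
  also have "\<dots> = Sup (range f)" using assms(3) by (simp add: sum_distrib_right[symmetric])
  finally show "(\<Sum>x\<in>A. w x * f x) \<le> Sup (range f)" .
qed

lemma pot_bounds_pmf:
  assumes "finite (set_pmf p)" "\<And>x y. 0 \<le> k x y \<and> k x y \<le> C"
  shows "0 \<le> potential k (measure_pmf p) x \<and> potential k (measure_pmf p) x \<le> C"
proof -
  have "(\<Sum>y\<in>set_pmf p. pmf p y * k x y) \<le> (\<Sum>y\<in>set_pmf p. pmf p y * C)"
    by (intro sum_mono mult_left_mono) (auto simp: assms)
  also have "\<dots> = C" using sum_pmf_eq_1[of "set_pmf p" p] assms by (simp add: sum_distrib_right[symmetric])
  finally show ?thesis using assms by (auto simp: pot_pmf mult_ac intro!: sum_nonneg)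
qed

lemma lo_le_hi:
  assumes "finite (set_pmf p)" "finite (set_pmf q)" and symm: "\<And>x y. k x y = k y x"
    and b: "\<And>x y. 0 \<le> k x y \<and> k x y \<le> C"
  shows "Inf (range (potential k (measure_pmf p))) \<le> Sup (range (potential k (measure_pmf q)))"
proof -
  have bp: "bdd_below (range (potential k (measure_pmf p)))" "bdd_above (range (potential k (measure_pmf p)))"
   and bq: "bdd_below (range (potential k (measure_pmf q)))" "bdd_above (range (potential k (measure_pmf q)))"
  proof -
    have "\<And>x. 0 \<le> potential k (measure_pmf p) x \<and> potential k (measure_pmf p) x \<le> C"
         "\<And>x. 0 \<le> potential k (measure_pmf q) x \<and> potential k (measure_pmf q) x \<le> C"
      using pot_bounds_pmf[where k=k and C=C, OF assms(1) b] pot_bounds_pmf[where k=k and C=C, OF assms(2) b] by auto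
    then show "bdd_below (range (potential k (measure_pmf p)))" "bdd_above (range (potential k (measure_pmf p)))"
       "bdd_below (range (potential k (measure_pmf q)))" "bdd_above (range (potential k (measure_pmf q)))"
      by (auto intro!: bdd_belowI bdd_aboveI)
  qed
  have "Inf (range (potential k (measure_pmf p))) \<le> (\<Sum>x\<in>set_pmf q. pmf q x * potential k (measure_pmf p) x)"
    by (rule wavg_bounds(1)) (use assms bp sum_pmf_eq_1[of "set_pmf q" q] in auto)
  also have "\<dots> = (\<Sum>y\<in>set_pmf p. pmf p y * potential k (measure_pmf q) y)"
    by (rule cross) (use assms in auto)
  also have "\<dots> \<le> Sup (range (potential k (measure_pmf q)))"
    by (rule wavg_bounds(2)) (use assms bq sum_pmf_eq_1[of "set_pmf p" p] in auto)
  finally show ?thesis .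
qed

lemma distr_regular:
  fixes p :: "'a::metric_space pmf"
  assumes fin: "finite (set_pmf p)"
  shows "regular_borel_prob (distr (measure_pmf p) borel id)"
  unfolding regular_borel_prob_def
proof (intro conjI ballI)
  let ?M = "distr (measure_pmf p) borel id"
  have em: "emeasure ?M B = emeasure p B" if "B \<in> sets borel" for B
    using that by (simp add: emeasure_distr)
  show "sets ?M = sets borel" by simp
  show "prob_space ?M" by (rule prob_space.prob_space_distr[OF prob_space_measure_pmf]) simp
  fix B :: "'a set" assume B: "B \<in> sets borel"
  have fB: "finite (B \<inter> set_pmf p)" using fin by simp
  have cK: "compact (B \<inter> set_pmf p)" using fB by (rule finite_imp_compact)
  show "emeasure ?M B = (SUP K\<in>{K. compact K \<and> K \<subseteq> B}. emeasure ?M K)"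
  proof (rule antisym)
    show "emeasure ?M B \<le> (SUP K\<in>{K. compact K \<and> K \<subseteq> B}. emeasure ?M K)"
    proof -
      have "emeasure ?M B = emeasure ?M (B \<inter> set_pmf p)"
        using em[OF B] em[of "B \<inter> set_pmf p"] cK
        by (simp add: emeasure_Int_set_pmf compact_imp_closed borel_closed)
      also have "\<dots> \<le> (SUP K\<in>{K. compact K \<and> K \<subseteq> B}. emeasure ?M K)"
        by (rule SUP_upper) (use cK in auto)
      finally show ?thesis .
    qed
    show "(SUP K\<in>{K. compact K \<and> K \<subseteq> B}. emeasure ?M K) \<le> emeasure ?M B"
      by (rule SUP_least) (auto intro!: emeasure_mono simp: B compact_imp_closed borel_closed)
  qed
  let ?U = "- (set_pmf p - B)"
  have oU: "open ?U" using fin by (intro open_Compl finite_imp_closed) auto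
  show "emeasure ?M B = (INF U\<in>{U. open U \<and> B \<subseteq> U}. emeasure ?M U)"
  proof (rule antisym)
    show "emeasure ?M B \<le> (INF U\<in>{U. open U \<and> B \<subseteq> U}. emeasure ?M U)"
      by (rule INF_greatest) (auto intro!: emeasure_mono simp: borel_open)
    have "?U \<inter> set_pmf p = B \<inter> set_pmf p" by auto
    then have "emeasure ?M ?U = emeasure ?M B"
      using em[OF B] em[of ?U] oU
      by (metis borel_open emeasure_Int_set_pmf)
    then show "(INF U\<in>{U. open U \<and> B \<subseteq> U}. emeasure ?M U) \<le> emeasure ?M B"
      by (intro INF_lower2[of ?U] order.refl) (use oU in auto)
  qed
qed

lemma pot_distr:
  assumes "k x \<in> borel_measurable borel"
  shows "potential k (distr (measure_pmf p) borel id) x = potential k (measure_pmf p) x"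
  unfolding potential_def using assms by (subst integral_distr) auto

lemma rational_approx:
  fixes p :: "'a \<Rightarrow> real" and N :: nat and C :: real
  assumes fin: "finite F" and w0: "w0 \<in> F" and pnn: "\<And>w. w \<in> F \<Longrightarrow> 0 \<le> p w"
    and p1: "(\<Sum>w\<in>F. p w) = 1" and N: "N > 0"
  shows "\<exists>M. M \<noteq> {#} \<and> set_mset M \<subseteq> F \<and> (\<forall>g::'a\<Rightarrow>real. (\<forall>w. \<bar>g w\<bar> \<le> C) \<longrightarrow>
    \<bar>(\<Sum>w\<in>F. g w * pmf (pmf_of_multiset M) w) - (\<Sum>w\<in>F. g w * p w)\<bar> \<le> 2 * real (card F) * C / N)"
proof -
  define n where "n w = nat \<lfloor>real N * p w\<rfloor>" for w
  have n1: "real (n w) \<le> N * p w" "N * p w < real (n w) + 1" if "w \<in> F" for w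
  proof -
    have "0 \<le> real N * p w" using pnn[OF that] by simp
    then have e: "real (n w) = of_int \<lfloor>real N * p w\<rfloor>" unfolding n_def by simp
    show "real (n w) \<le> N * p w" "N * p w < real (n w) + 1" unfolding e by linarith+
  qed
  have "real (\<Sum>w\<in>F. n w) \<le> (\<Sum>w\<in>F. N * p w)" by (simp add: sum_mono n1)
  also have "\<dots> = N" by (simp add: sum_distrib_left[symmetric] p1)
  finally have sn: "(\<Sum>w\<in>F. n w) \<le> N" by linarith
  define r where "r = N - (\<Sum>w\<in>F. n w)"
  have rr: "real r = N - (\<Sum>w\<in>F. real (n w))" using sn by (simp add: r_def of_nat_diff)
  have "real r = (\<Sum>w\<in>F. N * p w - real (n w))"
    using rr by (simp add: sum_subtractf sum_distrib_left[symmetric] p1)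
  also have "\<dots> \<le> (\<Sum>w\<in>F. 1)" by (intro sum_mono) (use n1 in fastforce)
  finally have rF: "real r \<le> card F" by simp
  define m where "m w = n w + (if w = w0 then r else 0)" for w
  define M where "M = (\<Sum>w\<in>F. replicate_mset (m w) w)"
  have cnt: "count M w = (if w \<in> F then m w else 0)" for w
  proof -
    have "count M w = (\<Sum>a\<in>F. if a = w then m a else 0)"
      unfolding M_def count_sum by (intro sum.cong) auto
    also have "\<dots> = (if w \<in> F then m w else 0)" using fin by (simp add: sum.delta')
    finally show ?thesis .
  qed
  have "size M = (\<Sum>w\<in>F. m w)" by (simp add: M_def)
  also have "\<dots> = (\<Sum>w\<in>F. n w) + r" using fin w0 by (simp add: m_def sum.distrib sum.delta')
  also have "\<dots> = N" using sn by (simp add: r_def)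
  finally have sz: "size M = N" .
  then have Mne: "M \<noteq> {#}" using N by auto
  have sub: "set_mset M \<subseteq> F"
  proof
    fix x assume "x \<in># M"
    then have "count M x \<noteq> 0" by simp
    then show "x \<in> F" using cnt[of x] by (auto split: if_splits)
  qed
  show ?thesis
  proof (intro exI conjI allI impI)
    fix g :: "'a \<Rightarrow> real" assume g: "\<forall>w. \<bar>g w\<bar> \<le> C"
  have C0: "0 \<le> C" using g abs_ge_zero order.trans by blast
    have "(\<Sum>w\<in>F. g w * pmf (pmf_of_multiset M) w) - (\<Sum>w\<in>F. g w * p w)
        = (\<Sum>w\<in>F. g w * (real (m w) - N * p w)) / N"
    proof -
      have e1: "(\<Sum>w\<in>F. g w * pmf (pmf_of_multiset M) w) = (\<Sum>w\<in>F. g w * real (m w)) / N"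
        unfolding sum_divide_distrib using Mne sz by (intro sum.cong) (auto simp: cnt)
      have e2: "(\<Sum>w\<in>F. g w * p w) = (\<Sum>w\<in>F. g w * (N * p w)) / N"
        unfolding sum_divide_distrib using N by (intro sum.cong) auto
      show ?thesis unfolding e1 e2 diff_divide_distrib[symmetric] sum_subtractf[symmetric]
        by (simp add: right_diff_distrib)
    qed
    also have "(\<Sum>w\<in>F. g w * (real (m w) - N * p w)) = (\<Sum>w\<in>F. g w * (real (n w) - N * p w)) + g w0 * r"
    proof -
      have "(\<Sum>w\<in>F. g w * (real (m w) - N * p w)) = (\<Sum>w\<in>F. g w * (real (n w) - N * p w) + (if w = w0 then g w * r else 0))"
        by (intro sum.cong) (auto simp: m_def algebra_simps)
      also have "\<dots> = (\<Sum>w\<in>F. g w * (real (n w) - N * p w)) + g w0 * r"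
        using fin w0 by (simp add: sum.distrib sum.delta')
      finally show ?thesis .
    qed
    finally have eq: "(\<Sum>w\<in>F. g w * pmf (pmf_of_multiset M) w) - (\<Sum>w\<in>F. g w * p w)
        = ((\<Sum>w\<in>F. g w * (real (n w) - N * p w)) + g w0 * r) / N" .
    have "\<bar>\<Sum>w\<in>F. g w * (real (n w) - N * p w)\<bar> \<le> (\<Sum>w\<in>F. \<bar>g w * (real (n w) - N * p w)\<bar>)"
      by (rule sum_abs)
    also have "\<dots> \<le> (\<Sum>w\<in>F. C * 1)"
    proof (intro sum_mono)
      fix w assume w: "w \<in> F"
      have "\<bar>real (n w) - N * p w\<bar> \<le> 1" using n1[OF w] by linarith
      then show "\<bar>g w * (real (n w) - N * p w)\<bar> \<le> C * 1"
        unfolding abs_mult using g C0 by (intro mult_mono) auto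
    qed
    finally have a1: "\<bar>\<Sum>w\<in>F. g w * (real (n w) - N * p w)\<bar> \<le> C * card F" by (simp add: mult.commute)
    have a2: "\<bar>g w0 * r\<bar> \<le> C * card F"
      unfolding abs_mult using g C0 rF by (intro mult_mono) auto
    have "\<bar>(\<Sum>w\<in>F. g w * (real (n w) - N * p w)) + g w0 * r\<bar> \<le> 2 * real (card F) * C"
      using a1 a2 abs_triangle_ineq[of "\<Sum>w\<in>F. g w * (real (n w) - N * p w)" "g w0 * r"] by (simp add: algebra_simps)
    then show "\<bar>(\<Sum>w\<in>F. g w * pmf (pmf_of_multiset M) w) - (\<Sum>w\<in>F. g w * p w)\<bar> \<le> 2 * real (card F) * C / N"
      unfolding eq using N by (simp add: divide_right_mono)
  qed (use Mne sub in auto)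
qed
lemma partition_fun:
  fixes w0 :: "'a::metric_space"
  shows "\<exists>f::'a\<Rightarrow>'a. (\<forall>w. f -` {w} \<in> sets borel) \<and> (\<forall>y. f y \<in> insert w0 (set ts))
     \<and> (\<forall>y. (\<exists>t\<in>set ts. dist y t < d) \<longrightarrow> dist y (f y) < d)"
proof (induction ts)
  case Nil
  show ?case by (intro exI[of _ "\<lambda>_. w0"]) (auto simp: vimage_def)
next
  case (Cons t ts)
  then obtain f where f: "\<forall>w. f -` {w} \<in> sets borel" "\<forall>y. f y \<in> insert w0 (set ts)"
     "\<forall>y. (\<exists>t\<in>set ts. dist y t < d) \<longrightarrow> dist y (f y) < d" by blast
  define B where "B = {y. dist y t < d}"
  have oB: "open B" unfolding B_def by (rule open_Collect_less) (auto intro: continuous_intros)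
  define g where "g y = (if y \<in> B then t else f y)" for y
  have "g -` {w} = (if w = t then B else {}) \<union> (f -` {w} - B)" for w
    by (auto simp: g_def)
  then have "\<forall>w. g -` {w} \<in> sets borel" using f(1) oB by (auto simp: borel_open)
  moreover have "\<forall>y. g y \<in> insert w0 (set (t # ts))" using f(2) by (auto simp: g_def)
  moreover have "\<forall>y. (\<exists>t\<in>set (t#ts). dist y t < d) \<longrightarrow> dist y (g y) < d"
    using f(3) by (auto simp: g_def B_def)
  ultimately show ?case by blast
qed

lemma discretize:
  fixes f :: "'a \<Rightarrow> 'b" and g :: "'b \<Rightarrow> real"
  assumes ps: "prob_space M" and fin: "finite F" and fF: "\<And>y. f y \<in> F"
    and meas: "\<And>w. f -` {w} \<in> sets M" and sp: "space M = UNIV"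
  shows "integrable M (\<lambda>y. g (f y))" "(\<integral>y. g (f y) \<partial>M) = (\<Sum>w\<in>F. g w * measure M (f -` {w}))"
proof -
  have eq: "g (f y) = (\<Sum>w\<in>F. g w * indicator (f -` {w}) y)" for y
  proof -
    have "(\<Sum>w\<in>F. g w * indicator (f -` {w}) y) = (\<Sum>w\<in>F. if w = f y then g w else 0)"
      by (intro sum.cong) (auto simp: indicator_def)
    also have "\<dots> = g (f y)" using fF fin by (simp add: sum.delta')
    finally show ?thesis by simp
  qed
  have fm: "emeasure M A < \<infinity>" for A
    using finite_measure.emeasure_finite[of M A] ps prob_space_def by (auto simp: less_top)
  have int: "integrable M (\<lambda>y. \<Sum>w\<in>F. g w * indicator (f -` {w}) y)"
    by (intro Bochner_Integration.integrable_sum) (use meas fm in \<open>auto intro!: integrable_mult_right integrable_real_indicator\<close>)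
  then show "integrable M (\<lambda>y. g (f y))" by (simp add: eq[symmetric])
  have "(\<integral>y. g (f y) \<partial>M) = (\<integral>y. (\<Sum>w\<in>F. g w * indicator (f -` {w}) y) \<partial>M)"
    by (simp add: eq[symmetric])
  also have "\<dots> = (\<Sum>w\<in>F. g w * measure M (f -` {w}))"
    using meas fm sp by (subst Bochner_Integration.integral_sum) (auto intro!: integrable_mult_right integrable_real_indicator)
  finally show "(\<integral>y. g (f y) \<partial>M) = (\<Sum>w\<in>F. g w * measure M (f -` {w}))" .
qed

lemma approx:
  fixes k :: "'a::metric_space \<Rightarrow> 'a \<Rightarrow> real" and \<mu> :: "'a measure"
  assumes b: "\<And>x y. 0 \<le> k x y \<and> k x y \<le> C"
    and eq2: "\<And>e. e > 0 \<Longrightarrow> \<exists>\<delta>>0. \<forall>x y y'. dist y y' < \<delta> \<longrightarrow> \<bar>k x y - k x y'\<bar> < e"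
    and kmeas: "\<And>x. k x \<in> borel_measurable borel"
    and reg: "regular_borel_prob \<mu>" and eps: "\<epsilon> > 0"
  shows "\<exists>M. M \<noteq> {#} \<and> (\<forall>x. \<bar>potential k (measure_pmf (pmf_of_multiset M)) x - potential k \<mu> x\<bar> \<le> \<epsilon>)"
proof -
  have sets: "sets \<mu> = sets borel" and ps: "prob_space \<mu>" using reg by (auto simp: regular_borel_prob_def)
  have fmu: "finite_measure \<mu>" using ps unfolding prob_space_def by blast
  have sp: "space \<mu> = UNIV" using sets_eq_imp_space_eq[OF sets] by simp
  have m1: "measure \<mu> UNIV = 1" using prob_space.prob_space[OF ps] sp by simp
  have C0: "0 \<le> C" using b[of undefined undefined] by linarith
  define \<eta> where "\<eta> = \<epsilon> / (C + 3)"
  have eta: "\<eta> > 0" using eps C0 by (simp add: \<eta>_def)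
  have "emeasure \<mu> UNIV = (SUP K\<in>{K. compact K \<and> K \<subseteq> UNIV}. emeasure \<mu> K)"
    using reg by (auto simp: regular_borel_prob_def)
  moreover have "emeasure \<mu> UNIV = 1" using prob_space.emeasure_space_1[OF ps] sp by simp
  moreover have "ennreal (1 - \<eta>) < 1" proof -
    have "ennreal (1 - \<eta>) < ennreal 1" using eta by (intro ennreal_lessI) auto
    then show ?thesis by simp
  qed
  ultimately have "ennreal (1 - \<eta>) < (SUP K\<in>{K. compact K \<and> K \<subseteq> UNIV}. emeasure \<mu> K)"
    by simp
  then obtain K where K: "compact K" "ennreal (1 - \<eta>) < emeasure \<mu> K"
    unfolding less_SUP_iff by blast
  have Kb: "K \<in> sets \<mu>" using K(1) sets by (simp add: compact_imp_closed borel_closed)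
  have Kc: "-K \<in> sets \<mu>" using K(1) sets by (simp add: compact_imp_closed borel_open open_Compl)
  have "emeasure \<mu> K = ennreal (measure \<mu> K)"
    using finite_measure.emeasure_eq_measure[of \<mu> K] ps prob_space_def by blast
  with K(2) have "1 - \<eta> \<le> measure \<mu> K"
    by (cases "0 \<le> 1 - \<eta>") (auto simp: ennreal_less_iff intro: order.trans[OF _ measure_nonneg])
  moreover have "measure \<mu> (-K) = 1 - measure \<mu> K"
    using prob_space.prob_compl[OF ps Kb] sp by (simp add: Compl_eq_Diff_UNIV)
  ultimately have mK: "measure \<mu> (-K) \<le> \<eta>" by linarith
  obtain \<delta> where d: "\<delta> > 0" "\<forall>x y y'. dist y y' < \<delta> \<longrightarrow> \<bar>k x y - k x y'\<bar> < \<eta>"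
    using eq2[OF eta] by blast
  obtain T where T: "T \<subseteq> K" "finite T" "K \<subseteq> (\<Union>t\<in>T. ball t \<delta>)"
  proof -
    have cov: "K \<subseteq> (\<Union>t\<in>K. ball t \<delta>)" using d(1) centre_in_ball by blast
    show ?thesis by (rule compactE_image[OF K(1) open_ball cov]) (rule that)
  qed
  obtain ts where ts: "set ts = T" using finite_list[OF T(2)] by blast
  define w0 :: 'a where "w0 = undefined"
  define F where "F = insert w0 T"
  have finF: "finite F" "w0 \<in> F" using T(2) by (auto simp: F_def)
  obtain f where f: "\<forall>w. f -` {w} \<in> sets borel" "\<forall>y. f y \<in> insert w0 (set ts)"
     "\<forall>y. (\<exists>t\<in>set ts. dist y t < \<delta>) \<longrightarrow> dist y (f y) < \<delta>"
    using partition_fun[of w0 ts \<delta>] by (elim exE conjE) (rule that)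
  have fF: "f y \<in> F" for y using f(2) ts by (auto simp: F_def)
  have fm: "f -` {w} \<in> sets \<mu>" for w unfolding sets using f(1) by blast
  have close: "\<bar>k x y - k x (f y)\<bar> < \<eta>" if yK: "y \<in> K" for x y
  proof -
    obtain t where "t \<in> T" "dist t y < \<delta>" using subsetD[OF T(3) yK] by auto
    then have "dist y (f y) < \<delta>" using f(3) ts by (metis dist_commute)
    then show ?thesis by (rule d(2)[rule_format])
  qed
  define p where "p w = measure \<mu> (f -` {w})" for w
  have pnn: "0 \<le> p w" for w by (simp add: p_def)
  have p1: "(\<Sum>w\<in>F. p w) = 1"
  proof -
    have "(\<integral>y. (\<lambda>_. 1::real) (f y) \<partial>\<mu>) = (\<Sum>w\<in>F. 1 * p w)"
      unfolding p_def by (rule discretize(2)[OF ps finF(1) fF fm sp])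
    moreover have "(\<integral>y. (\<lambda>_. 1::real) (f y) \<partial>\<mu>) = 1"
      using prob_space.prob_space[OF ps] by simp
    ultimately show ?thesis by simp
  qed
  have kint: "integrable \<mu> (k x)" for x
  proof -
    have "k x \<in> borel_measurable \<mu>" using kmeas measurable_cong_sets[OF sets refl] by blast
    then show ?thesis using b C0
      by (intro finite_measure.integrable_const_bound[where B=C]) (use fmu in auto)
  qed
  have err1: "\<bar>potential k \<mu> x - (\<Sum>w\<in>F. k x w * p w)\<bar> \<le> \<eta> + C * \<eta>" for x
  proof -
    have fint: "integrable \<mu> (\<lambda>y. k x (f y))" by (rule discretize(1)[OF ps finF(1) fF fm sp])
    have fi: "(\<integral>y. k x (f y) \<partial>\<mu>) = (\<Sum>w\<in>F. k x w * p w)"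
      unfolding p_def by (rule discretize(2)[OF ps finF(1) fF fm sp])
    have iK: "integrable \<mu> (indicator (-K) :: 'a \<Rightarrow> real)"
    proof (rule integrable_real_indicator[OF Kc])
      show "emeasure \<mu> (-K) < \<infinity>" using finite_measure.emeasure_finite[OF fmu, of "-K"] by (simp add: less_top)
    qed
    have ic: "integrable \<mu> (\<lambda>y. \<eta>)" by (rule finite_measure.integrable_const[OF fmu])
    have iCK: "integrable \<mu> (\<lambda>y. C * indicator (-K) y)" by (rule integrable_mult_right[OF iK])
    have "\<bar>potential k \<mu> x - (\<Sum>w\<in>F. k x w * p w)\<bar> = \<bar>\<integral>y. k x y - k x (f y) \<partial>\<mu>\<bar>"
      unfolding potential_def fi[symmetric] Bochner_Integration.integral_diff[OF kint fint] ..
    also have "\<dots> \<le> (\<integral>y. \<bar>k x y - k x (f y)\<bar> \<partial>\<mu>)" by (rule integral_abs_bound)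
    also have "\<dots> \<le> (\<integral>y. \<eta> + C * indicator (-K) y \<partial>\<mu>)"
    proof (rule Bochner_Integration.integral_mono)
      show "integrable \<mu> (\<lambda>y. \<bar>k x y - k x (f y)\<bar>)"
        by (rule integrable_abs[OF Bochner_Integration.integrable_diff[OF kint fint]])
      show "integrable \<mu> (\<lambda>y. \<eta> + C * indicator (-K) y)"
        by (rule Bochner_Integration.integrable_add[OF ic iCK])
      fix y
      show "\<bar>k x y - k x (f y)\<bar> \<le> \<eta> + C * indicator (-K) y"
      proof (cases "y \<in> K")
        case True
        have "\<bar>k x y - k x (f y)\<bar> < \<eta>" by (rule close[OF True])
        then show ?thesis using True by simp
      next
        case False
        have "0 \<le> k x y" "k x y \<le> C" "0 \<le> k x (f y)" "k x (f y) \<le> C" using b[of x y] b[of x "f y"] by auto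
        then have "\<bar>k x y - k x (f y)\<bar> \<le> C" by linarith
        then show ?thesis using False eta by simp
      qed
    qed
    also have "\<dots> = \<eta> + C * measure \<mu> (-K)"
      unfolding Bochner_Integration.integral_add[OF ic iCK] using m1 sp by simp
    also have "\<dots> \<le> \<eta> + C * \<eta>" using mK C0 by (simp add: mult_left_mono)
    finally show ?thesis .
  qed
  define N :: nat where "N = nat \<lceil>2 * real (card F) * C / \<eta>\<rceil> + 1"
  have N0: "N > 0" by (simp add: N_def)
  have "2 * real (card F) * C / \<eta> \<le> N" unfolding N_def by linarith
  then have Nb: "2 * real (card F) * C / N \<le> \<eta>" using N0 eta by (simp add: field_simps)
  obtain M where M: "M \<noteq> {#}" "set_mset M \<subseteq> F" "\<forall>g::'a\<Rightarrow>real. (\<forall>w. \<bar>g w\<bar> \<le> C) \<longrightarrow>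
    \<bar>(\<Sum>w\<in>F. g w * pmf (pmf_of_multiset M) w) - (\<Sum>w\<in>F. g w * p w)\<bar> \<le> 2 * real (card F) * C / N"
    using rational_approx[OF finF(1) finF(2) pnn p1 N0, of C] by (elim exE conjE) (rule that)
  show ?thesis
  proof (intro exI conjI allI)
    fix x
    have pm: "potential k (measure_pmf (pmf_of_multiset M)) x = (\<Sum>w\<in>F. k x w * pmf (pmf_of_multiset M) w)"
      unfolding potential_def using M(1,2) finF(1) by (intro integral_measure_pmf_real) auto
    have "\<bar>(\<Sum>w\<in>F. k x w * pmf (pmf_of_multiset M) w) - (\<Sum>w\<in>F. k x w * p w)\<bar> \<le> \<eta>"
    proof -
      have kb: "\<forall>w. \<bar>k x w\<bar> \<le> C"
      proof
        fix w show "\<bar>k x w\<bar> \<le> C" using b[of x w] by simp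
      qed
      have "\<bar>(\<Sum>w\<in>F. k x w * pmf (pmf_of_multiset M) w) - (\<Sum>w\<in>F. k x w * p w)\<bar> \<le> 2 * real (card F) * C / N"
        using M(3) kb by blast
      then show ?thesis using Nb by linarith
    qed
    then have "\<bar>potential k (measure_pmf (pmf_of_multiset M)) x - potential k \<mu> x\<bar> \<le> \<eta> + (\<eta> + C * \<eta>)"
      using err1[of x] unfolding pm by linarith
    also have "\<dots> = (C + 2) * \<eta>" by (simp add: algebra_simps)
    also have "\<dots> \<le> \<epsilon>" using eps C0 by (simp add: \<eta>_def field_simps)
    finally show "\<bar>potential k (measure_pmf (pmf_of_multiset M)) x - potential k \<mu> x\<bar> \<le> \<epsilon>" .
  qed (use M in auto)
qed

lemma pot_bounds_reg:
  assumes reg: "regular_borel_prob \<mu>" and b: "\<And>x y. 0 \<le> k x y \<and> k x y \<le> C"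
    and kmeas: "k x \<in> borel_measurable borel"
  shows "0 \<le> potential k \<mu> x \<and> potential k \<mu> x \<le> C"
proof -
  have sets: "sets \<mu> = sets borel" and ps: "prob_space \<mu>" using reg by (auto simp: regular_borel_prob_def)
  have fmu: "finite_measure \<mu>" using ps unfolding prob_space_def by blast
  have sp: "space \<mu> = UNIV" using sets_eq_imp_space_eq[OF sets] by simp
  have m1: "measure \<mu> UNIV = 1" using prob_space.prob_space[OF ps] sp by simp
  have C0: "0 \<le> C" using b[of undefined undefined] by linarith
  have km: "k x \<in> borel_measurable \<mu>" using kmeas measurable_cong_sets[OF sets refl] by blast
  have kint: "integrable \<mu> (k x)"
    using b C0 km by (intro finite_measure.integrable_const_bound[where B=C]) (use fmu in auto)
  have "potential k \<mu> x \<le> (\<integral>y. C \<partial>\<mu>)"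
    unfolding potential_def
    by (rule Bochner_Integration.integral_mono[OF kint finite_measure.integrable_const[OF fmu]]) (use b in auto)
  also have "(\<integral>y. C \<partial>\<mu>) = C" using m1 sp by simp
  finally show ?thesis unfolding potential_def using b
    by (auto intro!: Bochner_Integration.integral_nonneg)
qed

lemma A_mu_interval:
  assumes "\<And>x. 0 \<le> potential k M x \<and> potential k M x \<le> C"
  shows "A_mu k M = {Inf (range (potential k M))..Sup (range (potential k M))}"
  unfolding A_mu_def by (rule cl_hull_interval[OF assms])

lemma bdd_pot:
  assumes "\<And>x. 0 \<le> potential k M x \<and> potential k M x \<le> C"
  shows "bdd_below (range (potential k M))" "bdd_above (range (potential k M))"
  using assms by (auto intro!: bdd_belowI bdd_aboveI)

theorem theorem3p2:
  fixes k :: "'a::metric_space \<Rightarrow> 'a \<Rightarrow> real"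
  assumes nonneg: "\<And>x y. 0 \<le> k x y"
    and symm: "\<And>x y. k x y = k y x"
    and bdd: "\<exists>C. \<forall>x y. k x y \<le> C"
    and equicont: "\<forall>e>0. \<exists>\<delta>>0. \<forall>y x x'. dist x x' < \<delta> \<longrightarrow> \<bar>k x y - k x' y\<bar> < e"
  shows "average_set k = rendezvous_set k \<and> average_set k \<noteq> {}"
proof -
  obtain C where C: "\<forall>x y. k x y \<le> C" using bdd by blast
  have b: "\<And>x y. 0 \<le> k x y \<and> k x y \<le> C" using C nonneg by blast
  have eq2: "\<exists>\<delta>>0. \<forall>x y y'. dist y y' < \<delta> \<longrightarrow> \<bar>k x y - k x y'\<bar> < e" if e0: "e > 0" for e
  proof -
    obtain \<delta> where d: "\<delta> > 0" "\<forall>y x x'. dist x x' < \<delta> \<longrightarrow> \<bar>k x y - k x' y\<bar> < e"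
      using equicont e0 by blast
    have "\<bar>k x y - k x y'\<bar> < e" if "dist y y' < \<delta>" for x y y'
    proof -
      have "\<bar>k y x - k y' x\<bar> < e" using d(2)[rule_format, of y y' x] that by blast
      then show ?thesis by (simp only: symm[of x y] symm[of x y'])
    qed
    then show ?thesis using d(1) by blast
  qed
  have kmeas: "k x \<in> borel_measurable borel" for x
  proof (rule borel_measurable_continuous_onI)
    show "continuous_on UNIV (k x)"
      unfolding continuous_on_iff
    proof (intro ballI allI impI)
      fix y :: 'a and e :: real assume "e > 0"
      then obtain \<delta> where d: "\<delta> > 0" "\<forall>x y y'. dist y y' < \<delta> \<longrightarrow> \<bar>k x y - k x y'\<bar> < e"
        using eq2 by blast
      show "\<exists>d>0. \<forall>x'\<in>UNIV. dist x' y < d \<longrightarrow> dist (k x x') (k x y) < e"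
        using d by (auto simp: dist_real_def)
    qed
  qed
  define pw where "pw ws = measure_pmf (pmf_of_multiset (mset ws))" for ws :: "'a list"
  have fin: "finite (set_pmf (pmf_of_multiset (mset ws)))" if "ws \<noteq> []" for ws
    using that by simp
  have bw: "0 \<le> potential k (pw ws) x \<and> potential k (pw ws) x \<le> C" if "ws \<noteq> []" for ws x
    unfolding pw_def by (rule pot_bounds_pmf[OF fin[OF that] b])
  have Aw: "A_mu k (pw ws) = {Inf (range (potential k (pw ws)))..Sup (range (potential k (pw ws)))}"
    if "ws \<noteq> []" for ws using A_mu_interval bw[OF that] by blast
  have br: "0 \<le> potential k \<mu> x \<and> potential k \<mu> x \<le> C" if "regular_borel_prob \<mu>" for \<mu> x
    by (rule pot_bounds_reg[OF that b kmeas])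
  have Ar: "A_mu k \<mu> = {Inf (range (potential k \<mu>))..Sup (range (potential k \<mu>))}"
    if "regular_borel_prob \<mu>" for \<mu> using A_mu_interval br[OF that] by blast
  have lh: "Inf (range (potential k (pw ws))) \<le> Sup (range (potential k (pw vs)))"
    if "ws \<noteq> []" "vs \<noteq> []" for ws vs
    unfolding pw_def by (rule lo_le_hi[OF fin[OF that(1)] fin[OF that(2)] symm b])
  have memR: "t \<in> rendezvous_set k \<longleftrightarrow> (\<forall>ws. ws \<noteq> [] \<longrightarrow> t \<in> A_mu k (pw ws))" for t
    unfolding rendezvous_set_def pw_def by blast
  have memA: "t \<in> average_set k \<longleftrightarrow> (\<forall>\<mu>. regular_borel_prob \<mu> \<longrightarrow> t \<in> A_mu k \<mu>)" for t
    unfolding average_set_def by blast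
  have AR: "average_set k \<subseteq> rendezvous_set k"
  proof
    fix t assume t: "t \<in> average_set k"
    show "t \<in> rendezvous_set k" unfolding memR
    proof (intro allI impI)
      fix ws :: "'a list" assume ws: "ws \<noteq> []"
      let ?M = "distr (pw ws) borel id"
      have reg: "regular_borel_prob ?M" unfolding pw_def by (rule distr_regular[OF fin[OF ws]])
      have "potential k ?M = potential k (pw ws)"
        unfolding pw_def by (rule ext, rule pot_distr[OF kmeas])
      then have "A_mu k ?M = A_mu k (pw ws)" by (simp add: A_mu_def)
      then show "t \<in> A_mu k (pw ws)" using t reg memA by metis
    qed
  qed
  have RA: "rendezvous_set k \<subseteq> average_set k"
  proof
    fix t assume t: "t \<in> rendezvous_set k"
    show "t \<in> average_set k" unfolding memA
    proof (intro allI impI)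
      fix \<mu> :: "'a measure" assume reg: "regular_borel_prob \<mu>"
      let ?lo = "Inf (range (potential k \<mu>))" and ?hi = "Sup (range (potential k \<mu>))"
      have bb: "bdd_below (range (potential k \<mu>))" "bdd_above (range (potential k \<mu>))"
        using bdd_pot[OF br[OF reg]] .
      have key: "?lo - \<epsilon> \<le> t \<and> t \<le> ?hi + \<epsilon>" if eps: "\<epsilon> > 0" for \<epsilon>
      proof -
        obtain M where M: "M \<noteq> {#}" "\<forall>x. \<bar>potential k (measure_pmf (pmf_of_multiset M)) x - potential k \<mu> x\<bar> \<le> \<epsilon>"
          using approx[OF b eq2 kmeas reg eps] by blast
        obtain ws where ws: "mset ws = M" using ex_mset by blast
        have wsne: "ws \<noteq> []" using ws M(1) by auto
        have cl: "\<bar>potential k (pw ws) x - potential k \<mu> x\<bar> \<le> \<epsilon>" for x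
          using M(2) ws unfolding pw_def by blast
        have "t \<in> A_mu k (pw ws)" using t memR wsne by blast
        then have tI: "Inf (range (potential k (pw ws))) \<le> t" "t \<le> Sup (range (potential k (pw ws)))"
          using Aw[OF wsne] by auto
        have "?lo - \<epsilon> \<le> Inf (range (potential k (pw ws)))"
        proof (rule cINF_greatest)
          fix x
          have "?lo \<le> potential k \<mu> x" using bb by (auto intro: cINF_lower)
          then show "?lo - \<epsilon> \<le> potential k (pw ws) x" using cl[of x] by linarith
        qed simp
        moreover have "Sup (range (potential k (pw ws))) \<le> ?hi + \<epsilon>"
        proof (rule cSUP_least)
          fix x
          have "potential k \<mu> x \<le> ?hi" using bb by (auto intro: cSUP_upper)
          then show "potential k (pw ws) x \<le> ?hi + \<epsilon>" using cl[of x] by linarith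
        qed simp
        ultimately show ?thesis using tI by linarith
      qed
      have "?lo \<le> t"
      proof (rule ccontr)
        assume h: "\<not> ?lo \<le> t"
        then have "0 < (?lo - t) / 2" by simp
        then have "?lo - (?lo - t) / 2 \<le> t" using key by blast
        then show False using h by (simp add: field_simps)
      qed
      moreover have "t \<le> ?hi"
      proof (rule ccontr)
        assume h: "\<not> t \<le> ?hi"
        then have "0 < (t - ?hi) / 2" by simp
        then have "t \<le> ?hi + (t - ?hi) / 2" using key by blast
        then show False using h by (simp add: field_simps)
      qed
      ultimately show "t \<in> A_mu k \<mu>" using Ar[OF reg] by simp
    qed
  qed
  define w :: 'a where "w = undefined"
  define a where "a = (SUP ws\<in>{ws. ws \<noteq> []}. Inf (range (potential k (pw ws))))"
  have ba: "bdd_above ((\<lambda>ws. Inf (range (potential k (pw ws)))) ` {ws. ws \<noteq> []})"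
    using lh[of _ "[w]"] by (auto intro!: bdd_aboveI)
  have "a \<in> rendezvous_set k" unfolding memR
  proof (intro allI impI)
    fix ws :: "'a list" assume ws: "ws \<noteq> []"
    have "Inf (range (potential k (pw ws))) \<le> a"
      unfolding a_def using ws ba by (auto intro!: cSUP_upper)
    moreover have "a \<le> Sup (range (potential k (pw ws)))"
      unfolding a_def using ws lh by (auto intro!: cSUP_least)
    ultimately show "a \<in> A_mu k (pw ws)" using Aw[OF ws] by simp
  qed
  then show ?thesis using AR RA by blast
qed

end
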